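(* Let $d\in\mathbb{N}$, $\mathbf{n},\mathbf{m}\in\mathbb{N}^d$ with $\mathbf{m}\ge\mathbf{n}$, and $\mathbf{0}\le\mathbf{w}\le\mathbf{n}-\mathbf{1}$. Let $\mathbf{x}_*\in\mathbb{C}^{\mathbf{n}}$ with $\operatorname{Im}(x_{*,\mathbf{w}})=0$ and set $\mathbf{y}=|\mathcal{F}\{\mathbf{x}_*\}|^2$ (so $f_{LS}(\mathbf{x}_*;\mathbf{y})=0$). For $\boldsymbol{\epsilon}\in\mathbb{C}^{\mathbf{n}}$ put $\boldsymbol{\mathcal{E}}=\mathcal{F}\{\boldsymbol{\epsilon}\}$, $\mathbf{X}_*=\mathcal{F}\{\mathbf{x}_*\}$, $\mathbf{R}=\operatorname{Re}(\boldsymbol{\mathcal{E}}\odot\overline{\mathbf{X}_*})\in\mathbb{R}^{\mathbf{m}}$, the Lyapunov candidate $V(\boldsymbol{\epsilon})=\tfrac12\|\boldsymbol{\epsilon}\|_2^2$, and $$\dot V(\boldsymbol{\epsilon})=\operatorname{Re}\bigl\langle \nabla V(\boldsymbol{\epsilon}),-\nabla f_{reg}(\mathbf{x}_*+\boldsymbol{\epsilon};\mathbf{y},1,\mathbf{w})\bigr\rangle=-\operatorname{Re}\bigl(\boldsymbol{\epsilon}^\dagger\,\nabla f_{reg}(\mathbf{x}_*+\boldsymbol{\epsilon};\mathbf{y},1,\mathbf{w})\bigr).$$ Then: (1) $V(\boldsymbol{\epsilon})\ge0$ for all $\boldsymbol{\epsilon}$, and (2) $V(\boldsymbol{\epsilon})=0$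 if and only if $\boldsymbol{\epsilon}=\mathbf{0}$; (3) for every $\boldsymbol{\epsilon}$ with $g(\boldsymbol{\epsilon}):=\|\boldsymbol{\mathcal{E}}\|_4^4-\sum_{\mathbf{k}}|\mathcal{E}_{\mathbf{k}}|^2|R_{\mathbf{k}}|<0$, one has $\dot V(\boldsymbol{\epsilon})<0$; (4) for any constants $0<\delta<1$ and $\alpha>0$, every $\boldsymbol{\epsilon}$ satisfying $\|\boldsymbol{\mathcal{E}}\|_4^4<\delta\sum_{\mathbf{k}}|\mathcal{E}_{\mathbf{k}}|^2|R_{\mathbf{k}}|$ and $\|\mathbf{R}\|_2^2>\alpha\|\boldsymbol{\epsilon}\|_2^2$ satisfies $$\dot V(\boldsymbol{\epsilon})\le-\frac{(1-\delta)(7+\delta)}{4}\,\alpha\,V(\boldsymbol{\epsilon}).$$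
   Context: Multi-index notation: $\mathbb{C}^{\mathbf{n}}=\mathbb{C}^{n_1\times\cdots\times n_d}$, inequalities between multi-indices componentwise, $M=\prod_i m_i$. $\mathcal{F}:\mathbb{C}^{\mathbf{n}}\to\mathbb{C}^{\mathbf{m}}$, $\mathcal{F}\{\mathbf{x}\}_{\mathbf{k}}=M^{-1/2}\sum_{\mathbf{0}\le\mathbf{i}\le\mathbf{n}-\mathbf{1}}x_{\mathbf{i}}e^{-2\pi j\sum_lk_li_l/m_l}$ ($\mathbf{0}\le\mathbf{k}<\mathbf{m}$, $j^2=-1$). Operations $|\cdot|$, $\overline{\cdot}$, $\operatorname{Re}$ are entrywise; $\odot$ is the entrywise product. $f_{LS}(\mathbf{x};\mathbf{y})=\tfrac14\||\mathcal{F}\{\mathbf{x}\}|^2-\mathbf{y}\|_2^2$, $f_{reg}(\mathbf{x};\mathbf{y},\lambda,\mathbf{w})=f_{LS}(\mathbf{x};\mathbf{y})+\tfrac\lambda2(\operatorname{Im}x_{\mathbf{w}})^2$. Gradients are real gradients under $\mathbb{C}^{\mathbf{n}}\cong\mathbb{R}^{2N}$ written as complex vectors, $\nabla f=\partial f/\partial\operatorname{Re}\mathbf{x}+j\,\partial f/\partial\operatorname{Im}\mathbf{x}$; thus $\nabla V(\boldsymbol{\epsilon})=\boldsymbol{\epsilon}$ and $\nabla f_{LS}(\mathbf{x})=\mathcal{F}^\dagger\{(|\mathcal{F}\{\mathbf{x}\}|^2-\mathbf{y})\odot\mathcal{F}\{\mathbf{x}\}\}$. *)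

theory Defs
  imports "HOL-Analysis.Analysis"
begin

text \<open>Multi-indices in N^d are lists of length d; arrays in C^n are functions
  on nat lists, only their values on the index box matter.\<close>

definition idx :: "nat \<Rightarrow> nat list \<Rightarrow> nat list set" where
  "idx d n = {i. length i = d \<and> (\<forall>l<d. i ! l < n ! l)}"

definition DFT :: "nat \<Rightarrow> nat list \<Rightarrow> nat list \<Rightarrow> (nat list \<Rightarrow> complex) \<Rightarrow> nat list \<Rightarrow> complex" where
  "DFT d n m x k = complex_of_real (1 / sqrt (real (prod_list m))) *
     (\<Sum>i\<in>idx d n. x i * exp (- 2 * pi * \<i> *
        complex_of_real (\<Sum>l<d. real (k ! l) * real (i ! l) / real (m ! l))))"

definition f_LS :: "nat \<Rightarrow> nat list \<Rightarrow> nat list \<Rightarrow> (nat list \<Rightarrow> complex) \<Rightarrow> (nat list \<Rightarrow> real) \<Rightarrow> real" where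
  "f_LS d n m x y = 1/4 * (\<Sum>k\<in>idx d m. ((cmod (DFT d n m x k))\<^sup>2 - y k)\<^sup>2)"

definition f_reg :: "nat \<Rightarrow> nat list \<Rightarrow> nat list \<Rightarrow> (nat list \<Rightarrow> complex) \<Rightarrow> (nat list \<Rightarrow> real)
    \<Rightarrow> real \<Rightarrow> nat list \<Rightarrow> real" where
  "f_reg d n m x y lam w = f_LS d n m x y + lam / 2 * (Im (x w))\<^sup>2"

text \<open>Real gradient under C^n = R^(2N), written as a complex vector:
  grad f x at i = df/dRe x_i + j df/dIm x_i.\<close>
definition real_grad :: "((nat list \<Rightarrow> complex) \<Rightarrow> real) \<Rightarrow> (nat list \<Rightarrow> complex) \<Rightarrow> nat list \<Rightarrow> complex" where
  "real_grad f x i =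
     complex_of_real (deriv (\<lambda>t::real. f (x(i := x i + complex_of_real t))) 0) +
     \<i> * complex_of_real (deriv (\<lambda>t::real. f (x(i := x i + \<i> * complex_of_real t))) 0)"

definition sqnorm2 :: "nat list set \<Rightarrow> (nat list \<Rightarrow> complex) \<Rightarrow> real" where
  "sqnorm2 I x = (\<Sum>i\<in>I. (cmod (x i))\<^sup>2)"

definition Lyap :: "nat \<Rightarrow> nat list \<Rightarrow> (nat list \<Rightarrow> complex) \<Rightarrow> real" where
  "Lyap d n \<epsilon> = 1/2 * sqnorm2 (idx d n) \<epsilon>"

definition Lyap_dot :: "nat \<Rightarrow> nat list \<Rightarrow> nat list \<Rightarrow> (nat list \<Rightarrow> complex) \<Rightarrow> nat list
    \<Rightarrow> (nat list \<Rightarrow> complex) \<Rightarrow> real" where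
  "Lyap_dot d n m xs w \<epsilon> =
     (let y = (\<lambda>k. (cmod (DFT d n m xs k))\<^sup>2) in
      - Re (\<Sum>i\<in>idx d n. cnj (\<epsilon> i) *
             real_grad (\<lambda>x. f_reg d n m x y 1 w) (\<lambda>i. xs i + \<epsilon> i) i))"

end

theory Submission
  imports Defs
begin

lemma finite_idx: "finite (idx d n)"
proof -
  have "idx d n \<subseteq> {xs. set xs \<subseteq> {..<(\<Sum>l<d. n ! l)} \<and> length xs = d}"
  proof
    fix i assume "i \<in> idx d n"
    then have L: "length i = d" and B: "\<forall>l<d. i ! l < n ! l" by (auto simp: idx_def)
    have "set i \<subseteq> {..<(\<Sum>l<d. n ! l)}"
    proof
      fix a assume "a \<in> set i"
      then obtain l where l: "l < length i" "i ! l = a" by (auto simp: in_set_conv_nth)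
      then have "a < n ! l" using B L by auto
      moreover have "n ! l \<le> (\<Sum>l<d. n ! l)"
        by (rule member_le_sum) (use l L in auto)
      ultimately show "a \<in> {..<(\<Sum>l<d. n ! l)}" by auto
    qed
    then show "i \<in> {xs. set xs \<subseteq> {..<(\<Sum>l<d. n ! l)} \<and> length xs = d}" using L by auto
  qed
  then show ?thesis using finite_subset finite_lists_length_eq by blast
qed

lemma DFT_lin: "DFT d n m (\<lambda>j. x j + complex_of_real t * v j) k = DFT d n m x k + complex_of_real t * DFT d n m v k"
  unfolding DFT_def by (simp add: distrib_left distrib_right sum.distrib sum_distrib_left mult_ac)

lemma cmod_lin: "(cmod (A + complex_of_real t * B))^2 = (cmod A)^2 + 2*t*Re(B * cnj A) + t^2 * (cmod B)^2"
  unfolding cmod_power2 by (simp add: power2_eq_square algebra_simps)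

lemma deriv_F:
  "((\<lambda>t. f_reg d n m (\<lambda>j. x j + complex_of_real t * v j) y 1 w) has_real_derivative
     (\<Sum>k\<in>idx d m. ((cmod (DFT d n m x k))\<^sup>2 - y k) * Re (DFT d n m v k * cnj (DFT d n m x k)))
      + Im (x w) * Im (v w)) (at 0)"
proof -
  have eq: "(\<lambda>t. f_reg d n m (\<lambda>j. x j + complex_of_real t * v j) y 1 w) =
    (\<lambda>t. 1/4 * (\<Sum>k\<in>idx d m. ((cmod (DFT d n m x k))\<^sup>2 + 2*t*Re(DFT d n m v k * cnj (DFT d n m x k))
       + t^2 * (cmod (DFT d n m v k))\<^sup>2 - y k)\<^sup>2) + 1/2 * (Im (x w) + t * Im (v w))\<^sup>2)"
    by (simp add: f_reg_def f_LS_def DFT_lin cmod_lin)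
  show ?thesis unfolding eq
    apply (rule derivative_eq_intros refl | simp)+
    apply (simp add: sum_distrib_left algebra_simps)
    done
qed

definition ek :: "nat \<Rightarrow> nat list \<Rightarrow> nat list \<Rightarrow> nat list \<Rightarrow> complex" where
  "ek d m k i = complex_of_real (1 / sqrt (real (prod_list m))) * exp (- 2 * pi * \<i> *
        complex_of_real (\<Sum>l<d. real (k ! l) * real (i ! l) / real (m ! l)))"

lemma DFT_alt: "DFT d n m v k = (\<Sum>i\<in>idx d n. v i * ek d m k i)"
  by (simp add: DFT_def ek_def sum_distrib_left mult_ac)

lemma DFT_add: "DFT d n m (\<lambda>j. x j + v j) k = DFT d n m x k + DFT d n m v k"
  by (simp add: DFT_alt distrib_right sum.distrib)

lemma DFT_delta: "i0 \<in> idx d n \<Longrightarrow> DFT d n m (\<lambda>j. if j = i0 then c else 0) k = c * ek d m k i0"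
proof -
  assume i0: "i0 \<in> idx d n"
  have "\<And>j. (if j = i0 then c else 0) * ek d m k j = (if j = i0 then c * ek d m k j else 0)" by simp
  then show ?thesis by (simp only: DFT_alt sum.delta finite_idx) (simp add: i0)
qed

lemma grad_F:
  assumes i0: "i0 \<in> idx d n"
  shows "real_grad (\<lambda>x. f_reg d n m x y 1 w) x i0 =
    complex_of_real (\<Sum>k\<in>idx d m. ((cmod (DFT d n m x k))\<^sup>2 - y k) * Re (ek d m k i0 * cnj (DFT d n m x k)))
    + \<i> * complex_of_real ((\<Sum>k\<in>idx d m. ((cmod (DFT d n m x k))\<^sup>2 - y k) * Re (\<i> * ek d m k i0 * cnj (DFT d n m x k)))
       + Im (x w) * (if w = i0 then 1 else 0))"
proof -
  have u1: "\<And>t. x(i0 := x i0 + complex_of_real t) = (\<lambda>j. x j + complex_of_real t * (if j = i0 then 1 else 0))"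
    by (auto simp: fun_eq_iff)
  have u2: "\<And>t. x(i0 := x i0 + \<i> * complex_of_real t) = (\<lambda>j. x j + complex_of_real t * (if j = i0 then \<i> else 0))"
    by (auto simp: fun_eq_iff)
  show ?thesis
    unfolding real_grad_def u1 u2
    apply (subst DERIV_imp_deriv[OF deriv_F])+
    apply (simp add: DFT_delta[OF i0] mult.assoc)
    done
qed

lemma ineq3: "(a::real) \<ge> 0 \<Longrightarrow> (2*R + a)*(R + a) \<ge> a*\<bar>R\<bar> - a^2"
proof (cases "R \<ge> 0")
  case True
  assume "a \<ge> 0"
  then show ?thesis using True by (simp add: algebra_simps power2_eq_square)
next
  case False
  have "(2*R + a)*(R + a) - (a*\<bar>R\<bar> - a^2) = 2*(\<bar>R\<bar> - a)^2"
    using False by (simp add: algebra_simps power2_eq_square)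
  then show ?thesis by (smt (verit) zero_le_power2)
qed

lemma ineq4:
  assumes "(a::real) \<ge> 0" "0 < \<delta>" "\<delta> < 1"
  shows "(2*R + a)*(R + a) \<ge> (1-\<delta>)*(7+\<delta>)/8 * R^2 + \<delta> * (a*\<bar>R\<bar>) - a^2"
proof (cases "R \<ge> 0")
  case True
  have "(2*R + a)*(R + a) - ((1-\<delta>)*(7+\<delta>)/8 * R^2 + \<delta> * (a*\<bar>R\<bar>) - a^2)
     = (3+\<delta>)^2/8 * R^2 + (3-\<delta>)*(R*a) + 2*a^2"
    using True by (simp add: field_simps power2_eq_square)
  moreover have "(3-\<delta>)*(R*a) \<ge> 0" using True assms by simp
  moreover have "(3+\<delta>)^2/8 * R^2 \<ge> 0" by simp
  moreover have "2*a^2 \<ge> 0" by simp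
  ultimately show ?thesis by linarith
next
  case False
  have "(2*R + a)*(R + a) - ((1-\<delta>)*(7+\<delta>)/8 * R^2 + \<delta> * (a*\<bar>R\<bar>) - a^2)
     = 2*((3+\<delta>)*\<bar>R\<bar>/4 - a)^2"
    using False by (simp add: field_simps power2_eq_square)
  then show ?thesis by (smt (verit) zero_le_power2)
qed

lemma perk: "((cmod (X + E))\<^sup>2 - (cmod X)\<^sup>2) * Re (E * cnj (X + E))
   = (2 * Re (E * cnj X) + (cmod E)\<^sup>2) * (Re (E * cnj X) + (cmod E)\<^sup>2)"
  unfolding cmod_power2 by (simp add: algebra_simps power2_eq_square)

lemma Lyap_dot_eq:
  assumes w: "w \<in> idx d n"
  shows "Lyap_dot d n m xs w \<epsilon> = - ((\<Sum>k\<in>idx d m. ((cmod (DFT d n m xs k + DFT d n m \<epsilon> k))\<^sup>2 - (cmod (DFT d n m xs k))\<^sup>2)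
            * Re (DFT d n m \<epsilon> k * cnj (DFT d n m xs k + DFT d n m \<epsilon> k))) + Im (xs w + \<epsilon> w) * Im (\<epsilon> w))"
proof -
  define x where "x = (\<lambda>i. xs i + \<epsilon> i)"
  define y where "y = (\<lambda>k. (cmod (DFT d n m xs k))\<^sup>2)"
  define g where "g = (\<lambda>k. (cmod (DFT d n m x k))\<^sup>2 - y k)"
  define cA where "cA = (\<lambda>k. cnj (DFT d n m x k))"
  have Ax: "\<And>k. DFT d n m x k = DFT d n m xs k + DFT d n m \<epsilon> k" unfolding x_def by (rule DFT_add)
  have "Lyap_dot d n m xs w \<epsilon> = - Re (\<Sum>i\<in>idx d n. cnj (\<epsilon> i) * real_grad (\<lambda>x. f_reg d n m x y 1 w) x i)"
    by (simp add: Lyap_dot_def Let_def x_def y_def)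
  also have "Re (\<Sum>i\<in>idx d n. cnj (\<epsilon> i) * real_grad (\<lambda>x. f_reg d n m x y 1 w) x i)
     = (\<Sum>i\<in>idx d n. Re (\<epsilon> i) * (\<Sum>k\<in>idx d m. g k * Re (ek d m k i * cA k))
        + Im (\<epsilon> i) * (\<Sum>k\<in>idx d m. g k * Re (\<i> * ek d m k i * cA k)))
       + (\<Sum>i\<in>idx d n. Im (\<epsilon> i) * (Im (x w) * (if w = i then 1 else 0)))"
    unfolding Re_sum sum.distrib[symmetric]
    by (rule sum.cong) (simp_all add: grad_F g_def cA_def algebra_simps)
  also have "(\<Sum>i\<in>idx d n. Im (\<epsilon> i) * (Im (x w) * (if w = i then 1 else 0))) = Im (x w) * Im (\<epsilon> w)"
    using w by (simp add: if_distrib finite_idx cong: if_cong)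
  also have "(\<Sum>i\<in>idx d n. Re (\<epsilon> i) * (\<Sum>k\<in>idx d m. g k * Re (ek d m k i * cA k))
        + Im (\<epsilon> i) * (\<Sum>k\<in>idx d m. g k * Re (\<i> * ek d m k i * cA k)))
      = (\<Sum>k\<in>idx d m. g k * Re (DFT d n m \<epsilon> k * cA k))"
  proof -
    have "(\<Sum>k\<in>idx d m. g k * Re (DFT d n m \<epsilon> k * cA k)) = (\<Sum>k\<in>idx d m. \<Sum>i\<in>idx d n. g k * Re (\<epsilon> i * ek d m k i * cA k))"
      by (simp add: DFT_alt sum_distrib_right sum_distrib_left Re_sum)
    also have "\<dots> = (\<Sum>i\<in>idx d n. \<Sum>k\<in>idx d m. g k * Re (\<epsilon> i * ek d m k i * cA k))"
      by (rule sum.swap)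
    also have "\<dots> = (\<Sum>i\<in>idx d n. Re (\<epsilon> i) * (\<Sum>k\<in>idx d m. g k * Re (ek d m k i * cA k))
        + Im (\<epsilon> i) * (\<Sum>k\<in>idx d m. g k * Re (\<i> * ek d m k i * cA k)))"
      by (rule sum.cong) (simp_all add: sum_distrib_left sum.distrib[symmetric] algebra_simps)
    finally show ?thesis by simp
  qed
  finally show ?thesis unfolding g_def cA_def y_def Ax by (simp add: x_def)
qed

theorem theorem3p2:
  fixes d :: nat and n m w :: "nat list" and xs :: "nat list \<Rightarrow> complex"
  assumes "length n = d" and "length m = d"
    and "\<forall>l<d. n ! l \<le> m ! l"
    and "w \<in> idx d n"
    and "Im (xs w) = 0"
  defines "E \<equiv> \<lambda>\<epsilon>. DFT d n m \<epsilon>"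
    and "X \<equiv> DFT d n m xs"
    and "R \<equiv> \<lambda>\<epsilon> k. Re (DFT d n m \<epsilon> k * cnj (DFT d n m xs k))"
  shows "(\<forall>\<epsilon>. Lyap d n \<epsilon> \<ge> 0)
    \<and> (\<forall>\<epsilon>. Lyap d n \<epsilon> = 0 \<longleftrightarrow> (\<forall>i\<in>idx d n. \<epsilon> i = 0))
    \<and> (\<forall>\<epsilon>. (\<Sum>k\<in>idx d m. (cmod (E \<epsilon> k)) ^ 4)
              - (\<Sum>k\<in>idx d m. (cmod (E \<epsilon> k))\<^sup>2 * \<bar>R \<epsilon> k\<bar>) < 0
           \<longrightarrow> Lyap_dot d n m xs w \<epsilon> < 0)
    \<and> (\<forall>\<delta> \<alpha> :: real. 0 < \<delta> \<and> \<delta> < 1 \<and> \<alpha> > 0 \<longrightarrow>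
        (\<forall>\<epsilon>. (\<Sum>k\<in>idx d m. (cmod (E \<epsilon> k)) ^ 4)
                 < \<delta> * (\<Sum>k\<in>idx d m. (cmod (E \<epsilon> k))\<^sup>2 * \<bar>R \<epsilon> k\<bar>)
              \<and> (\<Sum>k\<in>idx d m. (R \<epsilon> k)\<^sup>2) > \<alpha> * sqnorm2 (idx d n) \<epsilon>
              \<longrightarrow> Lyap_dot d n m xs w \<epsilon> \<le> - ((1 - \<delta>) * (7 + \<delta>) / 4) * \<alpha> * Lyap d n \<epsilon>))"
proof -
  let ?a = "\<lambda>\<epsilon> k. (cmod (E \<epsilon> k))\<^sup>2"
  let ?Q = "\<lambda>\<epsilon> k. (2 * R \<epsilon> k + ?a \<epsilon> k) * (R \<epsilon> k + ?a \<epsilon> k)"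
  have fin: "finite (idx d n)" by (rule finite_idx)
  have LD: "Lyap_dot d n m xs w \<epsilon> = - (\<Sum>k\<in>idx d m. ?Q \<epsilon> k) - (Im (\<epsilon> w))\<^sup>2" for \<epsilon>
  proof -
    have "Im (xs w + \<epsilon> w) * Im (\<epsilon> w) = (Im (\<epsilon> w))\<^sup>2" using assms(5) by (simp add: power2_eq_square)
    then show ?thesis using Lyap_dot_eq[OF assms(4), of m xs \<epsilon>, unfolded perk] unfolding E_def R_def
      by linarith
  qed
  have p4: "\<And>z. (cmod z) ^ 4 = ((cmod z)\<^sup>2)\<^sup>2" by simp
  have sq0: "sqnorm2 (idx d n) \<epsilon> \<ge> 0" for \<epsilon>
    unfolding sqnorm2_def by (rule sum_nonneg) simp
  have P1: "\<forall>\<epsilon>. Lyap d n \<epsilon> \<ge> 0" using sq0 by (simp add: Lyap_def)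
  have P2: "\<forall>\<epsilon>. Lyap d n \<epsilon> = 0 \<longleftrightarrow> (\<forall>i\<in>idx d n. \<epsilon> i = 0)"
    by (simp add: Lyap_def sqnorm2_def sum_nonneg_eq_0_iff[OF fin])
  have P3: "\<forall>\<epsilon>. (\<Sum>k\<in>idx d m. (cmod (E \<epsilon> k)) ^ 4)
              - (\<Sum>k\<in>idx d m. (cmod (E \<epsilon> k))\<^sup>2 * \<bar>R \<epsilon> k\<bar>) < 0
           \<longrightarrow> Lyap_dot d n m xs w \<epsilon> < 0"
  proof (intro allI impI)
    fix \<epsilon>
    assume h: "(\<Sum>k\<in>idx d m. (cmod (E \<epsilon> k)) ^ 4) - (\<Sum>k\<in>idx d m. (cmod (E \<epsilon> k))\<^sup>2 * \<bar>R \<epsilon> k\<bar>) < 0"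
    have A: "(\<Sum>k\<in>idx d m. ?Q \<epsilon> k) \<ge> (\<Sum>k\<in>idx d m. ?a \<epsilon> k * \<bar>R \<epsilon> k\<bar> - (?a \<epsilon> k)\<^sup>2)"
      by (rule sum_mono) (rule ineq3, simp)
    have B: "(\<Sum>k\<in>idx d m. ?a \<epsilon> k * \<bar>R \<epsilon> k\<bar> - (?a \<epsilon> k)\<^sup>2) = (\<Sum>k\<in>idx d m. ?a \<epsilon> k * \<bar>R \<epsilon> k\<bar>) - (\<Sum>k\<in>idx d m. (cmod (E \<epsilon> k)) ^ 4)"
      by (simp add: sum_subtractf)
    have "(\<Sum>k\<in>idx d m. ?Q \<epsilon> k) > 0" using h A B by linarith
    then show "Lyap_dot d n m xs w \<epsilon> < 0" unfolding LD
      using zero_le_power2[of "Im (\<epsilon> w)"] by linarith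
  qed
  have P4: "\<forall>\<delta> \<alpha> :: real. 0 < \<delta> \<and> \<delta> < 1 \<and> \<alpha> > 0 \<longrightarrow>
        (\<forall>\<epsilon>. (\<Sum>k\<in>idx d m. (cmod (E \<epsilon> k)) ^ 4)
                 < \<delta> * (\<Sum>k\<in>idx d m. (cmod (E \<epsilon> k))\<^sup>2 * \<bar>R \<epsilon> k\<bar>)
              \<and> (\<Sum>k\<in>idx d m. (R \<epsilon> k)\<^sup>2) > \<alpha> * sqnorm2 (idx d n) \<epsilon>
              \<longrightarrow> Lyap_dot d n m xs w \<epsilon> \<le> - ((1 - \<delta>) * (7 + \<delta>) / 4) * \<alpha> * Lyap d n \<epsilon>)"
  proof (intro allI impI, elim conjE)
    fix \<delta> \<alpha> :: real and \<epsilon>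
    assume d0: "0 < \<delta>" and d1: "\<delta> < 1" and a0: "\<alpha> > 0"
      and h1: "(\<Sum>k\<in>idx d m. (cmod (E \<epsilon> k)) ^ 4) < \<delta> * (\<Sum>k\<in>idx d m. (cmod (E \<epsilon> k))\<^sup>2 * \<bar>R \<epsilon> k\<bar>)"
      and h2: "(\<Sum>k\<in>idx d m. (R \<epsilon> k)\<^sup>2) > \<alpha> * sqnorm2 (idx d n) \<epsilon>"
    define \<kappa> where "\<kappa> = (1-\<delta>)*(7+\<delta>)/8"
    have k0: "\<kappa> \<ge> 0" unfolding \<kappa>_def using d0 d1 by simp
    have A: "(\<Sum>k\<in>idx d m. ?Q \<epsilon> k) \<ge> (\<Sum>k\<in>idx d m. \<kappa> * (R \<epsilon> k)\<^sup>2 + \<delta> * (?a \<epsilon> k * \<bar>R \<epsilon> k\<bar>) - (?a \<epsilon> k)\<^sup>2)"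
      unfolding \<kappa>_def by (rule sum_mono) (rule ineq4, simp_all add: d0 d1)
    have B: "(\<Sum>k\<in>idx d m. \<kappa> * (R \<epsilon> k)\<^sup>2 + \<delta> * (?a \<epsilon> k * \<bar>R \<epsilon> k\<bar>) - (?a \<epsilon> k)\<^sup>2) = \<kappa> * (\<Sum>k\<in>idx d m. (R \<epsilon> k)\<^sup>2) + \<delta> * (\<Sum>k\<in>idx d m. ?a \<epsilon> k * \<bar>R \<epsilon> k\<bar>) - (\<Sum>k\<in>idx d m. (cmod (E \<epsilon> k)) ^ 4)"
      by (simp add: sum_subtractf sum.distrib sum_distrib_left)
    have "(\<Sum>k\<in>idx d m. ?Q \<epsilon> k) > \<kappa> * (\<Sum>k\<in>idx d m. (R \<epsilon> k)\<^sup>2)" using h1 A B by linarith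
    moreover have "\<kappa> * (\<Sum>k\<in>idx d m. (R \<epsilon> k)\<^sup>2) \<ge> \<kappa> * (\<alpha> * sqnorm2 (idx d n) \<epsilon>)"
      using h2 k0 by (intro mult_left_mono) simp_all
    ultimately have "Lyap_dot d n m xs w \<epsilon> \<le> - (\<kappa> * (\<alpha> * sqnorm2 (idx d n) \<epsilon>))"
      unfolding LD using zero_le_power2[of "Im (\<epsilon> w)"] by linarith
    then show "Lyap_dot d n m xs w \<epsilon> \<le> - ((1 - \<delta>) * (7 + \<delta>) / 4) * \<alpha> * Lyap d n \<epsilon>"
      by (simp add: Lyap_def \<kappa>_def)
  qed
  show ?thesis using P1 P2 P3 P4 by blast
qed

end
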